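(* Let $\mathcal K$ be a finitely complete 2-category with a good yoneda structure. Let $C$ be small, $i:M\to\mathcal PC$ and $f:C\to A$ with $M$ and $f$ admissible, and let $p:y_C/i\to C$, $q:y_C/i\to M$, $\lambda:y_Cp\Rightarrow iq$ be the lax pullback of $y_C$ and $i$. Let $k:M\to A$, let $\eta:i\Rightarrow A(f,1)k$ be a 2-cell and $\eta':fp\Rightarrow kq$ the corresponding 2-cell, i.e. the unique one with $(A(f,1)\eta')\cdot(\chi^fp)=(\eta q)\cdot\lambda$. Then: (1) $\eta$ exhibits $k$ as a left lifting of $i$ along $A(f,1)$ iff $\eta'$ exhibits $k$ as a left extension of $fp$ along $q$; (2) $\eta$ exhibits $k$ as an absolute left lifting of $i$ along $A(f,1)$ iff $\eta'$ exhibits $k$ as a pointwise left extension of $fp$ along $q$.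
   Context: For $f:A\to B$, $g:C\to B$ the lax pullback $f/g$ has projections $p:f/g\to A$, $q:f/g\to C$ and universal 2-cell $\lambda:fp\Rightarrow gq$. Given $f:A\to C$, $g:A\to B$, $h:B\to C$, a 2-cell $\phi:f\Rightarrow hg$ exhibits $h$ as a left extension of $f$ along $g$ if for every $k:B\to C$, $\kappa\mapsto(\kappa g)\cdot\phi$ is a bijection from 2-cells $h\Rightarrow k$ to 2-cells $f\Rightarrow kg$; it exhibits $g$ as a left lifting of $f$ along (through) $h$ if for every $k:A\to B$, $\kappa\mapsto(h\kappa)\cdot\phi$ is a bijection from 2-cells $g\Rightarrow k$ to 2-cells $f\Rightarrow hk$; the lifting is absolute if $\phi j$ exhibits $gj$ as a left lifting of $fj$ along $h$ for all $j:D\to A$. $\phi$ exhibits $h$ as a pointwise left extension of $f$ along $g$ if for every $c:X\to B$, with lax pullback $p:g/c\to A$, $q:g/c\to X$, $\lambda:gp\Rightarrow cq$, $(h\lambda)\cdot(\phi p)$ exhibits $hc$ as a left extension of $fp$ along $q$. A good yoneda structure: a class of admissible 1-cells with $fg$ admissible whenever $f$ is; $A$ admissible when $1_A$ is; for admissible $A$ an object $\mathcal PA$ and admissible $y_A:A\to\mathcal PA$; for $f:A\to B$ with $A$, $f$ admissible a 1-cell $B(f,1):B\to\mathcal PA$ and 2-cell $\chi^f:y_A\Rightarrow B(f,1)f$; such that (i) $\chi^f$ exhibits $f$ as an absolute left lifting of $y_A$ through $B(f,1)$; (ii) if $A$, $f:A\to B$ admissible and $\psi:y_A\Rightarrow gf$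 exhibits $f$ as an absolute left lifting of $y_A$ along $g$, then $\psi$ exhibits $g$ as a pointwise left extension of $y_A$ along $f$. $C$ is small if $C$ and $\mathcal PC$ are admissible. In this setting $\lambda$ exhibits $i$ as a left extension of $y_Cp$ along $q$ and $\chi^f$ is a left lifting, so the defining equation gives a bijection $\eta\mapsto\eta'$ between 2-cells $i\Rightarrow A(f,1)k$ and 2-cells $fp\Rightarrow kq$. *)

theory Defs
  imports Main
begin

text \<open>A (strict) 2-category with objects of type 'o, 1-cells of type 'a and
2-cells of type 'c. comp1 g f is the composite g f (first f, then g);
vcomp b a is the vertical composite b . a (first a, then b);
hcomp b a is the horizontal composite b * a (a on the right).\<close>

record ('o, 'a, 'c) two_cat =
  dom1  :: "'a \<Rightarrow> 'o"
  cod1  :: "'a \<Rightarrow> 'o"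
  id1   :: "'o \<Rightarrow> 'a"
  comp1 :: "'a \<Rightarrow> 'a \<Rightarrow> 'a"
  src2  :: "'c \<Rightarrow> 'a"
  tgt2  :: "'c \<Rightarrow> 'a"
  id2   :: "'a \<Rightarrow> 'c"
  vcomp :: "'c \<Rightarrow> 'c \<Rightarrow> 'c"
  hcomp :: "'c \<Rightarrow> 'c \<Rightarrow> 'c"

definition arr1 :: "('o,'a,'c,'x) two_cat_scheme \<Rightarrow> 'a \<Rightarrow> 'o \<Rightarrow> 'o \<Rightarrow> bool" where
  "arr1 K f A B \<longleftrightarrow> dom1 K f = A \<and> cod1 K f = B"

definition cell2 :: "('o,'a,'c,'x) two_cat_scheme \<Rightarrow> 'c \<Rightarrow> 'a \<Rightarrow> 'a \<Rightarrow> bool" where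
  "cell2 K \<alpha> f g \<longleftrightarrow> src2 K \<alpha> = f \<and> tgt2 K \<alpha> = g"

definition lw :: "('o,'a,'c,'x) two_cat_scheme \<Rightarrow> 'a \<Rightarrow> 'c \<Rightarrow> 'c" where
  "lw K h \<alpha> = hcomp K (id2 K h) \<alpha>"

definition rw :: "('o,'a,'c,'x) two_cat_scheme \<Rightarrow> 'c \<Rightarrow> 'a \<Rightarrow> 'c" where
  "rw K \<alpha> j = hcomp K \<alpha> (id2 K j)"

definition two_category :: "('o,'a,'c,'x) two_cat_scheme \<Rightarrow> bool" where
  "two_category K \<longleftrightarrow>
    \<comment> \<open>underlying category of 1-cells\<close>
    (\<forall>A. arr1 K (id1 K A) A A) \<and>
    (\<forall>f g. dom1 K f = cod1 K g \<longrightarrow> arr1 K (comp1 K f g) (dom1 K g) (cod1 K f)) \<and>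
    (\<forall>f g h. dom1 K f = cod1 K g \<and> dom1 K g = cod1 K h \<longrightarrow>
        comp1 K (comp1 K f g) h = comp1 K f (comp1 K g h)) \<and>
    (\<forall>f. comp1 K f (id1 K (dom1 K f)) = f \<and> comp1 K (id1 K (cod1 K f)) f = f) \<and>
    \<comment> \<open>2-cells go between parallel 1-cells\<close>
    (\<forall>\<alpha>. dom1 K (src2 K \<alpha>) = dom1 K (tgt2 K \<alpha>) \<and> cod1 K (src2 K \<alpha>) = cod1 K (tgt2 K \<alpha>)) \<and>
    \<comment> \<open>vertical composition: hom categories\<close>
    (\<forall>f. cell2 K (id2 K f) f f) \<and>
    (\<forall>\<alpha> \<beta>. tgt2 K \<alpha> = src2 K \<beta> \<longrightarrow> cell2 K (vcomp K \<beta> \<alpha>) (src2 K \<alpha>) (tgt2 K \<beta>)) \<and>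
    (\<forall>\<alpha> \<beta> \<gamma>. tgt2 K \<alpha> = src2 K \<beta> \<and> tgt2 K \<beta> = src2 K \<gamma> \<longrightarrow>
        vcomp K (vcomp K \<gamma> \<beta>) \<alpha> = vcomp K \<gamma> (vcomp K \<beta> \<alpha>)) \<and>
    (\<forall>\<alpha>. vcomp K \<alpha> (id2 K (src2 K \<alpha>)) = \<alpha> \<and> vcomp K (id2 K (tgt2 K \<alpha>)) \<alpha> = \<alpha>) \<and>
    \<comment> \<open>horizontal composition\<close>
    (\<forall>\<alpha> \<beta>. dom1 K (src2 K \<beta>) = cod1 K (src2 K \<alpha>) \<longrightarrow>
        cell2 K (hcomp K \<beta> \<alpha>) (comp1 K (src2 K \<beta>) (src2 K \<alpha>)) (comp1 K (tgt2 K \<beta>) (tgt2 K \<alpha>))) \<and>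
    (\<forall>\<alpha> \<beta> \<gamma>. dom1 K (src2 K \<gamma>) = cod1 K (src2 K \<beta>) \<and> dom1 K (src2 K \<beta>) = cod1 K (src2 K \<alpha>) \<longrightarrow>
        hcomp K (hcomp K \<gamma> \<beta>) \<alpha> = hcomp K \<gamma> (hcomp K \<beta> \<alpha>)) \<and>
    (\<forall>\<alpha>. hcomp K \<alpha> (id2 K (id1 K (dom1 K (src2 K \<alpha>)))) = \<alpha> \<and>
         hcomp K (id2 K (id1 K (cod1 K (src2 K \<alpha>)))) \<alpha> = \<alpha>) \<and>
    (\<forall>f g. dom1 K g = cod1 K f \<longrightarrow> hcomp K (id2 K g) (id2 K f) = id2 K (comp1 K g f)) \<and>
    \<comment> \<open>interchange law\<close>
    (\<forall>\<alpha> \<alpha>' \<beta> \<beta>'. tgt2 K \<alpha> = src2 K \<alpha>' \<and> tgt2 K \<beta> = src2 K \<beta>' \<and>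
        dom1 K (src2 K \<beta>) = cod1 K (src2 K \<alpha>) \<longrightarrow>
        hcomp K (vcomp K \<beta>' \<beta>) (vcomp K \<alpha>' \<alpha>) = vcomp K (hcomp K \<beta>' \<alpha>') (hcomp K \<beta> \<alpha>))"

definition is_lax_pullback ::
  "('o,'a,'c,'x) two_cat_scheme \<Rightarrow> 'a \<Rightarrow> 'a \<Rightarrow> 'o \<Rightarrow> 'a \<Rightarrow> 'a \<Rightarrow> 'c \<Rightarrow> bool" where
  "is_lax_pullback K f g P p q l \<longleftrightarrow>
     cod1 K f = cod1 K g \<and>
     arr1 K p P (dom1 K f) \<and> arr1 K q P (dom1 K g) \<and>
     cell2 K l (comp1 K f p) (comp1 K g q) \<and>
     (\<forall>X a c \<theta>. arr1 K a X (dom1 K f) \<and> arr1 K c X (dom1 K g) \<and>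
        cell2 K \<theta> (comp1 K f a) (comp1 K g c) \<longrightarrow>
        (\<exists>!u. arr1 K u X P \<and> comp1 K p u = a \<and> comp1 K q u = c \<and> rw K l u = \<theta>)) \<and>
     (\<forall>X u v \<alpha> \<beta>. arr1 K u X P \<and> arr1 K v X P \<and>
        cell2 K \<alpha> (comp1 K p u) (comp1 K p v) \<and> cell2 K \<beta> (comp1 K q u) (comp1 K q v) \<and>
        vcomp K (lw K g \<beta>) (rw K l u) = vcomp K (rw K l v) (lw K f \<alpha>) \<longrightarrow>
        (\<exists>!\<gamma>. cell2 K \<gamma> u v \<and> lw K p \<gamma> = \<alpha> \<and> lw K q \<gamma> = \<beta>))"

definition is_pullback ::
  "('o,'a,'c,'x) two_cat_scheme \<Rightarrow> 'a \<Rightarrow> 'a \<Rightarrow> 'o \<Rightarrow> 'a \<Rightarrow> 'a \<Rightarrow> bool" where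
  "is_pullback K f g P p q \<longleftrightarrow>
     cod1 K f = cod1 K g \<and>
     arr1 K p P (dom1 K f) \<and> arr1 K q P (dom1 K g) \<and>
     comp1 K f p = comp1 K g q \<and>
     (\<forall>X a c. arr1 K a X (dom1 K f) \<and> arr1 K c X (dom1 K g) \<and>
        comp1 K f a = comp1 K g c \<longrightarrow>
        (\<exists>!u. arr1 K u X P \<and> comp1 K p u = a \<and> comp1 K q u = c)) \<and>
     (\<forall>X u v \<alpha> \<beta>. arr1 K u X P \<and> arr1 K v X P \<and>
        cell2 K \<alpha> (comp1 K p u) (comp1 K p v) \<and> cell2 K \<beta> (comp1 K q u) (comp1 K q v) \<and>
        lw K f \<alpha> = lw K g \<beta> \<longrightarrow>
        (\<exists>!\<gamma>. cell2 K \<gamma> u v \<and> lw K p \<gamma> = \<alpha> \<and> lw K q \<gamma> = \<beta>))"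

definition is_terminal :: "('o,'a,'c,'x) two_cat_scheme \<Rightarrow> 'o \<Rightarrow> bool" where
  "is_terminal K T \<longleftrightarrow>
     (\<forall>X. \<exists>!t. arr1 K t X T) \<and>
     (\<forall>\<alpha>. cod1 K (src2 K \<alpha>) = T \<longrightarrow> \<alpha> = id2 K (src2 K \<alpha>))"

text \<open>Finite completeness of a 2-category (finite weighted limits), via the
standard characterisation: a terminal object, pullbacks and comma objects.\<close>
definition finitely_complete :: "('o,'a,'c,'x) two_cat_scheme \<Rightarrow> bool" where
  "finitely_complete K \<longleftrightarrow>
     (\<exists>T. is_terminal K T) \<and>
     (\<forall>f g. cod1 K f = cod1 K g \<longrightarrow> (\<exists>P p q. is_pullback K f g P p q)) \<and>
     (\<forall>f g. cod1 K f = cod1 K g \<longrightarrow> (\<exists>P p q l. is_lax_pullback K f g P p q l))"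

text \<open>phi : f \<Rightarrow> h g exhibits h as a left extension of f along g
(f : A \<rightarrow> C, g : A \<rightarrow> B, h : B \<rightarrow> C).\<close>
definition left_ext ::
  "('o,'a,'c,'x) two_cat_scheme \<Rightarrow> 'c \<Rightarrow> 'a \<Rightarrow> 'a \<Rightarrow> 'a \<Rightarrow> bool" where
  "left_ext K \<phi> f g h \<longleftrightarrow>
     dom1 K g = dom1 K f \<and> arr1 K h (cod1 K g) (cod1 K f) \<and>
     cell2 K \<phi> f (comp1 K h g) \<and>
     (\<forall>k. arr1 K k (cod1 K g) (cod1 K f) \<longrightarrow>
        bij_betw (\<lambda>\<kappa>. vcomp K (rw K \<kappa> g) \<phi>)
                 {\<kappa>. cell2 K \<kappa> h k} {\<sigma>. cell2 K \<sigma> f (comp1 K k g)})"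

text \<open>phi : f \<Rightarrow> h g exhibits g as a left lifting of f along h
(f : A \<rightarrow> C, g : A \<rightarrow> B, h : B \<rightarrow> C).\<close>
definition left_lift ::
  "('o,'a,'c,'x) two_cat_scheme \<Rightarrow> 'c \<Rightarrow> 'a \<Rightarrow> 'a \<Rightarrow> 'a \<Rightarrow> bool" where
  "left_lift K \<phi> f g h \<longleftrightarrow>
     dom1 K g = dom1 K f \<and> arr1 K h (cod1 K g) (cod1 K f) \<and>
     cell2 K \<phi> f (comp1 K h g) \<and>
     (\<forall>k. arr1 K k (dom1 K f) (cod1 K g) \<longrightarrow>
        bij_betw (\<lambda>\<kappa>. vcomp K (lw K h \<kappa>) \<phi>)
                 {\<kappa>. cell2 K \<kappa> g k} {\<sigma>. cell2 K \<sigma> f (comp1 K h k)})"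

definition abs_left_lift ::
  "('o,'a,'c,'x) two_cat_scheme \<Rightarrow> 'c \<Rightarrow> 'a \<Rightarrow> 'a \<Rightarrow> 'a \<Rightarrow> bool" where
  "abs_left_lift K \<phi> f g h \<longleftrightarrow>
     left_lift K \<phi> f g h \<and>
     (\<forall>D j. arr1 K j D (dom1 K f) \<longrightarrow>
        left_lift K (rw K \<phi> j) (comp1 K f j) (comp1 K g j) h)"

definition pointwise_left_ext ::
  "('o,'a,'c,'x) two_cat_scheme \<Rightarrow> 'c \<Rightarrow> 'a \<Rightarrow> 'a \<Rightarrow> 'a \<Rightarrow> bool" where
  "pointwise_left_ext K \<phi> f g h \<longleftrightarrow>
     dom1 K g = dom1 K f \<and> arr1 K h (cod1 K g) (cod1 K f) \<and>
     cell2 K \<phi> f (comp1 K h g) \<and>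
     (\<forall>X c P p q l. arr1 K c X (cod1 K g) \<and> is_lax_pullback K g c P p q l \<longrightarrow>
        left_ext K (vcomp K (lw K h l) (rw K \<phi> p)) (comp1 K f p) q (comp1 K h c))"

record ('o, 'a, 'c) yoneda_data =
  adm  :: "'a set"
  PSh  :: "'o \<Rightarrow> 'o"
  yon  :: "'o \<Rightarrow> 'a"
  Bhom :: "'a \<Rightarrow> 'a"        \<comment> \<open>f \<mapsto> B(f,1) : B \<rightarrow> \<P>A\<close>
  chi  :: "'a \<Rightarrow> 'c"

definition admissible_obj ::
  "('o,'a,'c,'x) two_cat_scheme \<Rightarrow> ('o,'a,'c,'y) yoneda_data_scheme \<Rightarrow> 'o \<Rightarrow> bool" where
  "admissible_obj K Y A \<longleftrightarrow> id1 K A \<in> adm Y"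

definition good_yoneda ::
  "('o,'a,'c,'x) two_cat_scheme \<Rightarrow> ('o,'a,'c,'y) yoneda_data_scheme \<Rightarrow> bool" where
  "good_yoneda K Y \<longleftrightarrow>
     (\<forall>f g. f \<in> adm Y \<and> dom1 K f = cod1 K g \<longrightarrow> comp1 K f g \<in> adm Y) \<and>
     (\<forall>A. admissible_obj K Y A \<longrightarrow> arr1 K (yon Y A) A (PSh Y A) \<and> yon Y A \<in> adm Y) \<and>
     (\<forall>f. admissible_obj K Y (dom1 K f) \<and> f \<in> adm Y \<longrightarrow>
        arr1 K (Bhom Y f) (cod1 K f) (PSh Y (dom1 K f)) \<and>
        cell2 K (chi Y f) (yon Y (dom1 K f)) (comp1 K (Bhom Y f) f) \<and>
        abs_left_lift K (chi Y f) (yon Y (dom1 K f)) f (Bhom Y f)) \<and>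
     (\<forall>f g \<psi>. admissible_obj K Y (dom1 K f) \<and> f \<in> adm Y \<and>
        abs_left_lift K \<psi> (yon Y (dom1 K f)) f g \<longrightarrow>
        pointwise_left_ext K \<psi> (yon Y (dom1 K f)) f g)"

definition small_obj ::
  "('o,'a,'c,'x) two_cat_scheme \<Rightarrow> ('o,'a,'c,'y) yoneda_data_scheme \<Rightarrow> 'o \<Rightarrow> bool" where
  "small_obj K Y C \<longleftrightarrow> admissible_obj K Y C \<and> admissible_obj K Y (PSh Y C)"

end

theory Submission
  imports Defs
begin


locale twocat =
  fixes K :: "('o,'a,'c,'x) two_cat_scheme"
  assumes TC: "two_category K"
begin

lemma D: "two_category K" by (rule TC)

lemmas DD = D[unfolded two_category_def arr1_def cell2_def]

lemma ax0: "\<And>A. dom1 K (id1 K A) = A"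
  using DD by (simp; fail | blast)

lemma ax1: "\<And>A. cod1 K (id1 K A) = A"
  using DD by (simp; fail | blast)

lemma ax2: "\<And>f g. dom1 K f = cod1 K g \<Longrightarrow> dom1 K (comp1 K f g) = dom1 K g"
  using DD by (simp; fail | blast)

lemma ax3: "\<And>f g. dom1 K f = cod1 K g \<Longrightarrow> cod1 K (comp1 K f g) = cod1 K f"
  using DD by (simp; fail | blast)

lemma ax4: "\<And>f g h. dom1 K f = cod1 K g \<Longrightarrow> dom1 K g = cod1 K h \<Longrightarrow>
        comp1 K (comp1 K f g) h = comp1 K f (comp1 K g h)"
  using DD by (simp; fail | blast)

lemma ax5: "\<And>f. comp1 K f (id1 K (dom1 K f)) = f"
  using DD by (simp; fail | blast)

lemma ax6: "\<And>f. comp1 K (id1 K (cod1 K f)) f = f"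
  using DD by (simp; fail | blast)

lemma ax7: "\<And>\<alpha>. dom1 K (tgt2 K \<alpha>) = dom1 K (src2 K \<alpha>)"
  using DD by (simp; fail | blast)

lemma ax8: "\<And>\<alpha>. cod1 K (tgt2 K \<alpha>) = cod1 K (src2 K \<alpha>)"
  using DD by (simp; fail | blast)

lemma ax9: "\<And>f. src2 K (id2 K f) = f"
  using DD by (simp; fail | blast)

lemma ax10: "\<And>f. tgt2 K (id2 K f) = f"
  using DD by (simp; fail | blast)

lemma ax11: "\<And>\<alpha> \<beta>. tgt2 K \<alpha> = src2 K \<beta> \<Longrightarrow> src2 K (vcomp K \<beta> \<alpha>) = src2 K \<alpha>"
  using DD by (simp; fail | blast)

lemma ax12: "\<And>\<alpha> \<beta>. tgt2 K \<alpha> = src2 K \<beta> \<Longrightarrow> tgt2 K (vcomp K \<beta> \<alpha>) = tgt2 K \<beta>"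
  using DD by (simp; fail | blast)

lemma ax13: "\<And>\<alpha> \<beta> \<gamma>. tgt2 K \<alpha> = src2 K \<beta> \<Longrightarrow> tgt2 K \<beta> = src2 K \<gamma> \<Longrightarrow>
        vcomp K (vcomp K \<gamma> \<beta>) \<alpha> = vcomp K \<gamma> (vcomp K \<beta> \<alpha>)"
  using DD by (simp; fail | blast)

lemma ax14: "\<And>\<alpha>. vcomp K \<alpha> (id2 K (src2 K \<alpha>)) = \<alpha>"
  using DD by (simp; fail | blast)

lemma ax15: "\<And>\<alpha>. vcomp K (id2 K (tgt2 K \<alpha>)) \<alpha> = \<alpha>"
  using DD by (simp; fail | blast)

lemma ax16: "\<And>\<alpha> \<beta>. dom1 K (src2 K \<beta>) = cod1 K (src2 K \<alpha>) \<Longrightarrow>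
        src2 K (hcomp K \<beta> \<alpha>) = comp1 K (src2 K \<beta>) (src2 K \<alpha>)"
  using DD by (simp; fail | blast)

lemma ax17: "\<And>\<alpha> \<beta>. dom1 K (src2 K \<beta>) = cod1 K (src2 K \<alpha>) \<Longrightarrow>
        tgt2 K (hcomp K \<beta> \<alpha>) = comp1 K (tgt2 K \<beta>) (tgt2 K \<alpha>)"
  using DD by (simp; fail | blast)

lemma ax18: "\<And>\<alpha> \<beta> \<gamma>. dom1 K (src2 K \<gamma>) = cod1 K (src2 K \<beta>) \<Longrightarrow> dom1 K (src2 K \<beta>) = cod1 K (src2 K \<alpha>) \<Longrightarrow>
        hcomp K (hcomp K \<gamma> \<beta>) \<alpha> = hcomp K \<gamma> (hcomp K \<beta> \<alpha>)"
  using DD by (simp; fail | blast)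

lemma ax19: "\<And>\<alpha>. hcomp K \<alpha> (id2 K (id1 K (dom1 K (src2 K \<alpha>)))) = \<alpha>"
  using DD by (simp; fail | blast)

lemma ax20: "\<And>\<alpha>. hcomp K (id2 K (id1 K (cod1 K (src2 K \<alpha>)))) \<alpha> = \<alpha>"
  using DD by (simp; fail | blast)

lemma ax21: "\<And>f g. dom1 K g = cod1 K f \<Longrightarrow> hcomp K (id2 K g) (id2 K f) = id2 K (comp1 K g f)"
  using DD by (simp; fail | blast)

lemma ax22: "\<And>\<alpha> \<alpha>' \<beta> \<beta>'. tgt2 K \<alpha> = src2 K \<alpha>' \<Longrightarrow> tgt2 K \<beta> = src2 K \<beta>' \<Longrightarrow>
        dom1 K (src2 K \<beta>) = cod1 K (src2 K \<alpha>) \<Longrightarrow>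
        hcomp K (vcomp K \<beta>' \<beta>) (vcomp K \<alpha>' \<alpha>) = vcomp K (hcomp K \<beta>' \<alpha>') (hcomp K \<beta> \<alpha>)"
  using DD by (simp; fail | blast)

lemmas [simp] = ax0 ax1 ax2 ax3 ax7 ax8 ax9 ax10 ax11 ax12

lemma compA: "dom1 K f = cod1 K g \<Longrightarrow> dom1 K g = cod1 K h \<Longrightarrow>
        comp1 K (comp1 K f g) h = comp1 K f (comp1 K g h)" by (rule ax4)
lemma comp_idR[simp]: "dom1 K f = A \<Longrightarrow> comp1 K f (id1 K A) = f" using ax5 by blast
lemma comp_idL[simp]: "cod1 K f = A \<Longrightarrow> comp1 K (id1 K A) f = f" using ax6 by blast
lemma vcA: "tgt2 K \<alpha> = src2 K \<beta> \<Longrightarrow> tgt2 K \<beta> = src2 K \<gamma> \<Longrightarrow>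
        vcomp K (vcomp K \<gamma> \<beta>) \<alpha> = vcomp K \<gamma> (vcomp K \<beta> \<alpha>)" by (rule ax13)
lemma vc_idR[simp]: "src2 K \<alpha> = f \<Longrightarrow> vcomp K \<alpha> (id2 K f) = \<alpha>" using ax14 by blast
lemma vc_idL[simp]: "tgt2 K \<alpha> = f \<Longrightarrow> vcomp K (id2 K f) \<alpha> = \<alpha>" using ax15 by blast

lemma lw_src[simp]: "dom1 K h = cod1 K (src2 K \<alpha>) \<Longrightarrow> src2 K (lw K h \<alpha>) = comp1 K h (src2 K \<alpha>)"
  unfolding lw_def using ax16[of "id2 K h" \<alpha>] by simp
lemma lw_tgt[simp]: "dom1 K h = cod1 K (src2 K \<alpha>) \<Longrightarrow> tgt2 K (lw K h \<alpha>) = comp1 K h (tgt2 K \<alpha>)"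
  unfolding lw_def using ax17[of "id2 K h" \<alpha>] by simp
lemma rw_src[simp]: "dom1 K (src2 K \<alpha>) = cod1 K j \<Longrightarrow> src2 K (rw K \<alpha> j) = comp1 K (src2 K \<alpha>) j"
  unfolding rw_def using ax16[of \<alpha> "id2 K j"] by simp
lemma rw_tgt[simp]: "dom1 K (src2 K \<alpha>) = cod1 K j \<Longrightarrow> tgt2 K (rw K \<alpha> j) = comp1 K (tgt2 K \<alpha>) j"
  unfolding rw_def using ax17[of \<alpha> "id2 K j"] by simp

lemma lw_vc: "dom1 K h = cod1 K (src2 K \<alpha>) \<Longrightarrow> tgt2 K \<alpha> = src2 K \<beta> \<Longrightarrow>
   lw K h (vcomp K \<beta> \<alpha>) = vcomp K (lw K h \<beta>) (lw K h \<alpha>)"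
  unfolding lw_def using ax22[of \<alpha> \<beta> "id2 K h" "id2 K h"] by simp
lemma rw_vc: "dom1 K (src2 K \<alpha>) = cod1 K j \<Longrightarrow> tgt2 K \<alpha> = src2 K \<beta> \<Longrightarrow>
   rw K (vcomp K \<beta> \<alpha>) j = vcomp K (rw K \<beta> j) (rw K \<alpha> j)"
  unfolding rw_def using ax22[of "id2 K j" "id2 K j" \<alpha> \<beta>] by simp

lemma lw_lw: "dom1 K h = cod1 K g \<Longrightarrow> dom1 K g = cod1 K (src2 K \<alpha>) \<Longrightarrow>
   lw K h (lw K g \<alpha>) = lw K (comp1 K h g) \<alpha>"
  unfolding lw_def using ax18[of "id2 K h" "id2 K g" \<alpha>] ax21[of h g] by simp
lemma rw_rw: "dom1 K (src2 K \<alpha>) = cod1 K j \<Longrightarrow> dom1 K j = cod1 K j' \<Longrightarrow>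
   rw K (rw K \<alpha> j) j' = rw K \<alpha> (comp1 K j j')"
  unfolding rw_def using ax18[of \<alpha> "id2 K j" "id2 K j'"] ax21[of j j'] by simp
lemma rw_lw: "dom1 K h = cod1 K (src2 K \<alpha>) \<Longrightarrow> dom1 K (src2 K \<alpha>) = cod1 K j \<Longrightarrow>
   rw K (lw K h \<alpha>) j = lw K h (rw K \<alpha> j)"
  unfolding rw_def lw_def using ax18[of "id2 K h" \<alpha> "id2 K j"] by simp
lemma lw_id2[simp]: "dom1 K h = cod1 K f \<Longrightarrow> lw K h (id2 K f) = id2 K (comp1 K h f)"
  unfolding lw_def using ax21 by simp
lemma rw_id2[simp]: "dom1 K f = cod1 K j \<Longrightarrow> rw K (id2 K f) j = id2 K (comp1 K f j)"
  unfolding rw_def using ax21 by simp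
lemma lw_id1[simp]: "cod1 K (src2 K \<alpha>) = B \<Longrightarrow> lw K (id1 K B) \<alpha> = \<alpha>"
  unfolding lw_def using ax20 by blast
lemma rw_id1[simp]: "dom1 K (src2 K \<alpha>) = A \<Longrightarrow> rw K \<alpha> (id1 K A) = \<alpha>"
  unfolding rw_def using ax19 by blast

lemma whisk_xch: "dom1 K (src2 K \<alpha>) = cod1 K (src2 K \<beta>) \<Longrightarrow>
  vcomp K (lw K (tgt2 K \<alpha>) \<beta>) (rw K \<alpha> (src2 K \<beta>)) = vcomp K (rw K \<alpha> (tgt2 K \<beta>)) (lw K (src2 K \<alpha>) \<beta>)"
proof -
  assume a: "dom1 K (src2 K \<alpha>) = cod1 K (src2 K \<beta>)"
  have "hcomp K \<alpha> \<beta> = hcomp K (vcomp K (id2 K (tgt2 K \<alpha>)) \<alpha>) (vcomp K \<beta> (id2 K (src2 K \<beta>)))"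
    by simp
  also have "\<dots> = vcomp K (lw K (tgt2 K \<alpha>) \<beta>) (rw K \<alpha> (src2 K \<beta>))"
    unfolding lw_def rw_def using a by (subst ax22) auto
  finally have 1: "hcomp K \<alpha> \<beta> = vcomp K (lw K (tgt2 K \<alpha>) \<beta>) (rw K \<alpha> (src2 K \<beta>))" .
  have "hcomp K \<alpha> \<beta> = hcomp K (vcomp K \<alpha> (id2 K (src2 K \<alpha>))) (vcomp K (id2 K (tgt2 K \<beta>)) \<beta>)"
    by simp
  also have "\<dots> = vcomp K (rw K \<alpha> (tgt2 K \<beta>)) (lw K (src2 K \<alpha>) \<beta>)"
    unfolding lw_def rw_def using a by (subst ax22) auto
  finally show ?thesis using 1 by simp
qed

end


context twocat begin

lemma core:
  assumes B0: "arr1 K B0 A P" and f: "arr1 K f Cc A" and y: "arr1 K y Cc P"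
  and chi: "abs_left_lift K \<chi> y f B0"
  and a: "arr1 K a Z Cc" and b: "arr1 K b Z X" and i': "arr1 K i' X P"
  and th: "left_ext K \<theta> (comp1 K y a) b i'"
  and k: "arr1 K k X A"
  and eta: "cell2 K \<eta> i' (comp1 K B0 k)"
  and eta': "cell2 K \<eta>' (comp1 K f a) (comp1 K k b)"
  and eq: "vcomp K (lw K B0 \<eta>') (rw K \<chi> a) = vcomp K (rw K \<eta> b) \<theta>"
  shows "left_lift K \<eta> i' k B0 \<longleftrightarrow> left_ext K \<eta>' (comp1 K f a) b k"
proof -
  note T = B0 f y a b i' k eta eta'
  note TT = T[unfolded arr1_def cell2_def]
  have thc: "cell2 K \<theta> (comp1 K y a) (comp1 K i' b)" using th unfolding left_ext_def by simp
  have chic: "cell2 K \<chi> y (comp1 K B0 f)" using chi unfolding abs_left_lift_def left_lift_def by simp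
  note TT2 = thc[unfolded cell2_def] chic[unfolded cell2_def]
  have main: "bij_betw (\<lambda>\<kappa>. vcomp K (lw K B0 \<kappa>) \<eta>) {\<kappa>. cell2 K \<kappa> k h} {\<sigma>. cell2 K \<sigma> i' (comp1 K B0 h)}
     \<longleftrightarrow> bij_betw (\<lambda>\<kappa>. vcomp K (rw K \<kappa> b) \<eta>') {\<kappa>. cell2 K \<kappa> k h} {\<sigma>. cell2 K \<sigma> (comp1 K f a) (comp1 K h b)}"
    if h: "arr1 K h X A" for h
  proof -
    note hh = h[unfolded arr1_def]
    let ?S1 = "{\<kappa>. cell2 K \<kappa> k h}"
    let ?S2 = "{\<sigma>. cell2 K \<sigma> i' (comp1 K B0 h)}"
    let ?S3 = "{\<sigma>. cell2 K \<sigma> (comp1 K f a) (comp1 K h b)}"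
    let ?S4 = "{\<sigma>. cell2 K \<sigma> (comp1 K y a) (comp1 K (comp1 K B0 h) b)}"
    let ?L = "\<lambda>\<kappa>. vcomp K (lw K B0 \<kappa>) \<eta>"
    let ?E = "\<lambda>\<kappa>. vcomp K (rw K \<kappa> b) \<eta>'"
    let ?P1 = "\<lambda>\<kappa>. vcomp K (rw K \<kappa> b) \<theta>"
    let ?P2 = "\<lambda>\<kappa>. vcomp K (lw K B0 \<kappa>) (rw K \<chi> a)"
    have bh: "arr1 K (comp1 K B0 h) X P" using TT hh by (simp add: arr1_def)
    have P1: "bij_betw ?P1 ?S2 ?S4"
      using th bh TT unfolding left_ext_def by auto
    have hb: "arr1 K (comp1 K h b) Z A" using TT hh by (simp add: arr1_def)
    have chia: "left_lift K (rw K \<chi> a) (comp1 K y a) (comp1 K f a) B0"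
      using chi TT unfolding abs_left_lift_def by (auto simp: arr1_def)
    have P2: "bij_betw ?P2 ?S3 ?S4"
    proof -
      have "comp1 K B0 (comp1 K h b) = comp1 K (comp1 K B0 h) b"
        using TT hh by (simp add: compA)
      then show ?thesis using chia hb TT unfolding left_lift_def by auto
    qed
    have Lim: "?L ` ?S1 \<subseteq> ?S2" using TT hh by (auto simp: cell2_def)
    have Eim: "?E ` ?S1 \<subseteq> ?S3" using TT hh by (auto simp: cell2_def)
    have comm: "?P1 (?L \<kappa>) = ?P2 (?E \<kappa>)" if "\<kappa> \<in> ?S1" for \<kappa>
    proof -
      have kk: "src2 K \<kappa> = k" "tgt2 K \<kappa> = h" using that by (auto simp: cell2_def)
      have "?P1 (?L \<kappa>) = vcomp K (vcomp K (rw K (lw K B0 \<kappa>) b) (rw K \<eta> b)) \<theta>"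
        using TT kk by (simp add: rw_vc)
      also have "\<dots> = vcomp K (lw K B0 (rw K \<kappa> b)) (vcomp K (rw K \<eta> b) \<theta>)"
        using TT TT2 kk by (simp add: vcA rw_lw compA)
      also have "\<dots> = vcomp K (lw K B0 (rw K \<kappa> b)) (vcomp K (lw K B0 \<eta>') (rw K \<chi> a))"
        by (simp add: eq)
      also have "\<dots> = ?P2 (?E \<kappa>)"
        using TT TT2 kk by (simp add: vcA lw_vc compA)
      finally show ?thesis .
    qed
    have "bij_betw ?L ?S1 ?S2 \<longleftrightarrow> bij_betw (?P1 \<circ> ?L) ?S1 ?S4"
      by (rule bij_betw_comp_iff2[OF P1 Lim])
    also have "\<dots> \<longleftrightarrow> bij_betw (?P2 \<circ> ?E) ?S1 ?S4"
      by (rule bij_betw_cong) (simp add: comm)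
    also have "\<dots> \<longleftrightarrow> bij_betw ?E ?S1 ?S3"
      by (rule bij_betw_comp_iff2[OF P2 Eim, symmetric])
    finally show ?thesis .
  qed
  show ?thesis
    unfolding left_lift_def left_ext_def using TT main by (auto simp: arr1_def cell2_def)
qed

end


context twocat begin

lemma lp_parts:
  assumes "is_lax_pullback K f g P p q l"
  shows "cod1 K f = cod1 K g" "dom1 K p = P" "cod1 K p = dom1 K f" "dom1 K q = P" "cod1 K q = dom1 K g"
    "src2 K l = comp1 K f p" "tgt2 K l = comp1 K g q"
  using assms unfolding is_lax_pullback_def arr1_def cell2_def by auto

lemma lp_ex:
  assumes "is_lax_pullback K f g P p q l"
    "arr1 K a X (dom1 K f)" "arr1 K c X (dom1 K g)" "cell2 K \<theta> (comp1 K f a) (comp1 K g c)"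
  shows "\<exists>u. arr1 K u X P \<and> comp1 K p u = a \<and> comp1 K q u = c \<and> rw K l u = \<theta>"
  using assms unfolding is_lax_pullback_def by blast

lemma lp_uniq:
  assumes "is_lax_pullback K f g P p q l"
    "arr1 K a X (dom1 K f)" "arr1 K c X (dom1 K g)" "cell2 K \<theta> (comp1 K f a) (comp1 K g c)"
    "arr1 K u1 X P" "comp1 K p u1 = a" "comp1 K q u1 = c" "rw K l u1 = \<theta>"
    "arr1 K u2 X P" "comp1 K p u2 = a" "comp1 K q u2 = c" "rw K l u2 = \<theta>"
  shows "u1 = u2"
proof -
  have "\<exists>!u. arr1 K u X P \<and> comp1 K p u = a \<and> comp1 K q u = c \<and> rw K l u = \<theta>"
    using assms(1-4) unfolding is_lax_pullback_def by blast
  then show ?thesis using assms(5-) by blast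
qed

lemma lp_2ex:
  assumes "is_lax_pullback K f g P p q l"
    "arr1 K u X P" "arr1 K v X P"
    "cell2 K \<alpha> (comp1 K p u) (comp1 K p v)" "cell2 K \<beta> (comp1 K q u) (comp1 K q v)"
    "vcomp K (lw K g \<beta>) (rw K l u) = vcomp K (rw K l v) (lw K f \<alpha>)"
  shows "\<exists>\<gamma>. cell2 K \<gamma> u v \<and> lw K p \<gamma> = \<alpha> \<and> lw K q \<gamma> = \<beta>"
  using assms unfolding is_lax_pullback_def by blast

lemma comma_paste:
  assumes LP: "is_lax_pullback K y i L p q l"
    and c: "arr1 K c X (dom1 K i)"
    and LP': "is_lax_pullback K q c P' p' q' l'"
    and LPc: "is_lax_pullback K y (comp1 K i c) Lc pc qc lc"
  shows "\<exists>u w \<epsilon>. arr1 K u P' Lc \<and> arr1 K w Lc P' \<and> comp1 K u w = id1 K Lc \<and>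
     cell2 K \<epsilon> (id1 K P') (comp1 K w u) \<and> comp1 K pc u = comp1 K p p' \<and> comp1 K qc u = q' \<and>
     rw K lc u = vcomp K (lw K i l') (rw K l p') \<and>
     lw K (comp1 K p p') \<epsilon> = id2 K (comp1 K p p') \<and> lw K q' \<epsilon> = id2 K q'"
proof -
  note A = lp_parts[OF LP] 
  note B = lp_parts[OF LP']
  note Cc = c[unfolded arr1_def]
  have ic: "cod1 K c = dom1 K i" using Cc by simp
  note D = lp_parts[OF LPc, simplified ic, simplified]
  note S = A B Cc D
  define \<theta> where "\<theta> = vcomp K (lw K i l') (rw K l p')"
  have thc: "cell2 K \<theta> (comp1 K y (comp1 K p p')) (comp1 K (comp1 K i c) q')"
    unfolding \<theta>_def cell2_def using S by (simp add: compA)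
  obtain u where u: "arr1 K u P' Lc" "comp1 K pc u = comp1 K p p'" "comp1 K qc u = q'" "rw K lc u = \<theta>"
    using lp_ex[OF LPc _ _ thc] S by (auto simp: arr1_def)
  have lcc: "cell2 K lc (comp1 K y pc) (comp1 K i (comp1 K c qc))"
    using S by (simp add: cell2_def compA)
  obtain w0 where w0: "arr1 K w0 Lc L" "comp1 K p w0 = pc" "comp1 K q w0 = comp1 K c qc" "rw K l w0 = lc"
    using lp_ex[OF LP _ _ lcc] S by (auto simp: arr1_def)
  have idc: "cell2 K (id2 K (comp1 K q w0)) (comp1 K q w0) (comp1 K c qc)"
    using w0 by (simp add: cell2_def)
  obtain w where w: "arr1 K w Lc P'" "comp1 K p' w = w0" "comp1 K q' w = qc" "rw K l' w = id2 K (comp1 K q w0)"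
    using lp_ex[OF LP' _ _ idc] S w0 by (auto simp: arr1_def)
  note U = u[unfolded arr1_def] w0[unfolded arr1_def] w[unfolded arr1_def]
  note Ut = u(1)[unfolded arr1_def] w0(1)[unfolded arr1_def] w(1)[unfolded arr1_def]
  have uw: "comp1 K u w = id1 K Lc"
  proof (rule lp_uniq[OF LPc])
    show "arr1 K pc Lc (dom1 K y)" "arr1 K qc Lc (dom1 K (comp1 K i c))"
      using S by (auto simp: arr1_def)
    show "cell2 K lc (comp1 K y pc) (comp1 K (comp1 K i c) qc)" using S by (simp add: cell2_def)
    show "arr1 K (comp1 K u w) Lc Lc" "arr1 K (id1 K Lc) Lc Lc" using U by (auto simp: arr1_def)
    have "comp1 K pc (comp1 K u w) = comp1 K (comp1 K pc u) w" using S Ut by (simp add: compA)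
    also have "\<dots> = comp1 K (comp1 K p p') w" using u by simp
    also have "\<dots> = comp1 K p (comp1 K p' w)" using S Ut by (simp add: compA)
    finally show "comp1 K pc (comp1 K u w) = pc" using w w0 by simp
    have "comp1 K qc (comp1 K u w) = comp1 K (comp1 K qc u) w" using S Ut by (simp add: compA)
    then show "comp1 K qc (comp1 K u w) = qc" using w u by simp
    show "comp1 K pc (id1 K Lc) = pc" "comp1 K qc (id1 K Lc) = qc" "rw K lc (id1 K Lc) = lc"
      using S by auto
    have "rw K lc (comp1 K u w) = rw K (rw K lc u) w" using S Ut rw_rw[of lc u w] by simp
    also have "\<dots> = vcomp K (rw K (lw K i l') w) (rw K (rw K l p') w)"
      unfolding u(4) \<theta>_def using S U by (simp add: rw_vc compA)
    also have "\<dots> = vcomp K (lw K i (rw K l' w)) (rw K l (comp1 K p' w))"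
      using S U by (simp add: rw_lw rw_rw)
    also have "\<dots> = lc" using S U by (simp add: compA)
    finally show "rw K lc (comp1 K u w) = lc" .
  qed
  have "comp1 K p (comp1 K w0 u) = comp1 K (comp1 K p w0) u" using S Ut by (simp add: compA)
  then have e1: "comp1 K p (comp1 K w0 u) = comp1 K p p'" using w0 u by simp
  have "comp1 K q (comp1 K w0 u) = comp1 K (comp1 K q w0) u" using S Ut by (simp add: compA)
  also have "\<dots> = comp1 K c (comp1 K qc u)" using w0 S U by (simp add: compA)
  finally have e2: "comp1 K q (comp1 K w0 u) = comp1 K c q'" using u by simp
  have "rw K l (comp1 K w0 u) = rw K (rw K l w0) u" using S Ut rw_rw[of l w0 u] by simp
  then have rlw0u: "rw K l (comp1 K w0 u) = \<theta>" using w0 u by simp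
  obtain \<alpha> where al: "cell2 K \<alpha> p' (comp1 K w0 u)" "lw K p \<alpha> = id2 K (comp1 K p p')" "lw K q \<alpha> = l'"
  proof -
    have "\<exists>\<gamma>. cell2 K \<gamma> p' (comp1 K w0 u) \<and> lw K p \<gamma> = id2 K (comp1 K p p') \<and> lw K q \<gamma> = l'"
    proof (rule lp_2ex[OF LP])
      show "arr1 K p' P' L" "arr1 K (comp1 K w0 u) P' L" using S U by (auto simp: arr1_def)
      show "cell2 K (id2 K (comp1 K p p')) (comp1 K p p') (comp1 K p (comp1 K w0 u))"
        using e1 by (simp add: cell2_def)
      show "cell2 K l' (comp1 K q p') (comp1 K q (comp1 K w0 u))"
        using e2 S by (simp add: cell2_def)
      show "vcomp K (lw K i l') (rw K l p') = vcomp K (rw K l (comp1 K w0 u)) (lw K y (id2 K (comp1 K p p')))"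
        unfolding rlw0u using S unfolding \<theta>_def by (simp add: compA)
    qed
    then show ?thesis using that by blast
  qed
  have "comp1 K p' (comp1 K w u) = comp1 K (comp1 K p' w) u" using S Ut by (simp add: compA)
  then have e3: "comp1 K p' (comp1 K w u) = comp1 K w0 u" using w by simp
  have "comp1 K q' (comp1 K w u) = comp1 K (comp1 K q' w) u" using S Ut by (simp add: compA)
  then have e4: "comp1 K q' (comp1 K w u) = q'" using w u by simp
  obtain \<epsilon> where ep: "cell2 K \<epsilon> (id1 K P') (comp1 K w u)" "lw K p' \<epsilon> = \<alpha>" "lw K q' \<epsilon> = id2 K q'"
  proof -
    have "\<exists>\<gamma>. cell2 K \<gamma> (id1 K P') (comp1 K w u) \<and> lw K p' \<gamma> = \<alpha> \<and> lw K q' \<gamma> = id2 K q'"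
    proof (rule lp_2ex[OF LP'])
      show "arr1 K (id1 K P') P' P'" "arr1 K (comp1 K w u) P' P'" using S U by (auto simp: arr1_def)
      show "cell2 K \<alpha> (comp1 K p' (id1 K P')) (comp1 K p' (comp1 K w u))"
        using e3 al S by (simp add: cell2_def)
      show "cell2 K (id2 K q') (comp1 K q' (id1 K P')) (comp1 K q' (comp1 K w u))"
        using e4 S by (simp add: cell2_def)
      have "rw K l' (comp1 K w u) = id2 K (comp1 K c q')"
      proof -
        have "rw K l' (comp1 K w u) = rw K (rw K l' w) u" using S Ut rw_rw[of l' w u] by simp
        also have "\<dots> = id2 K (comp1 K (comp1 K q w0) u)" using w S U by simp
        finally show ?thesis using e2 S U by (simp add: compA)
      qed
      then show "vcomp K (lw K c (id2 K q')) (rw K l' (id1 K P')) = vcomp K (rw K l' (comp1 K w u)) (lw K q \<alpha>)"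
        using S al by simp
    qed
    then show ?thesis using that by blast
  qed
  have "lw K (comp1 K p p') \<epsilon> = lw K p (lw K p' \<epsilon>)"
    using S ep(1) by (simp add: lw_lw cell2_def)
  then have "lw K (comp1 K p p') \<epsilon> = id2 K (comp1 K p p')" using ep al by simp
  then show ?thesis using u w uw ep unfolding \<theta>_def by blast
qed

end


context twocat begin

lemma transfer:
  assumes le: "left_ext K \<phi> F G H"
    and u: "arr1 K u Z Lc" and w: "arr1 K w Lc Z" and G: "dom1 K G = Lc"
    and uw: "comp1 K u w = id1 K Lc"
    and ep: "cell2 K \<epsilon> (id1 K Z) (comp1 K w u)"
    and F': "comp1 K F u = F'" and G': "comp1 K G u = G'"
    and e1: "lw K F' \<epsilon> = id2 K F'"
    and e2: "lw K G' \<epsilon> = id2 K G'"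
  shows "left_ext K (rw K \<phi> u) F' G' H"
proof -
  have L: "dom1 K G = dom1 K F" "arr1 K H (cod1 K G) (cod1 K F)" "cell2 K \<phi> F (comp1 K H G)"
    and LB: "\<And>k. arr1 K k (cod1 K G) (cod1 K F) \<Longrightarrow>
        bij_betw (\<lambda>\<kappa>. vcomp K (rw K \<kappa> G) \<phi>) {\<kappa>. cell2 K \<kappa> H k} {\<sigma>. cell2 K \<sigma> F (comp1 K k G)}"
    using le unfolding left_ext_def by auto
  note T = L[unfolded arr1_def cell2_def] u[unfolded arr1_def] w[unfolded arr1_def] G ep[unfolded cell2_def]
  have FF: "dom1 K F = Lc" using T by simp
  have cF': "cod1 K F' = cod1 K F" "dom1 K F' = Z" using F' T by auto
  have cG': "cod1 K G' = cod1 K G" "dom1 K G' = Z" using G' T by auto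
  have main: "bij_betw (\<lambda>\<kappa>. vcomp K (rw K \<kappa> G') (rw K \<phi> u)) {\<kappa>. cell2 K \<kappa> H h} {\<sigma>. cell2 K \<sigma> F' (comp1 K h G')}"
    if h: "arr1 K h (cod1 K G) (cod1 K F)" for h
  proof -
    note hh = h[unfolded arr1_def]
    let ?S1 = "{\<kappa>. cell2 K \<kappa> H h}"
    let ?S2 = "{\<tau>. cell2 K \<tau> F (comp1 K h G)}"
    let ?S3 = "{\<sigma>. cell2 K \<sigma> F' (comp1 K h G')}"
    have M: "bij_betw (\<lambda>\<kappa>. vcomp K (rw K \<kappa> G) \<phi>) ?S1 ?S2" using LB h by blast
    have W: "bij_betw (\<lambda>\<tau>. rw K \<tau> u) ?S2 ?S3"
    proof (rule bij_betw_byWitness[where f'="\<lambda>\<sigma>. rw K \<sigma> w"])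
      show "\<forall>a\<in>?S2. rw K (rw K a u) w = a"
      proof
        fix a assume "a \<in> ?S2"
        then have a: "src2 K a = F" "tgt2 K a = comp1 K h G" by (auto simp: cell2_def)
        have "rw K (rw K a u) w = rw K a (comp1 K u w)" using a T by (simp add: rw_rw)
        then show "rw K (rw K a u) w = a" using a T uw by simp
      qed
      show "\<forall>a\<in>?S3. rw K (rw K a w) u = a"
      proof
        fix a assume "a \<in> ?S3"
        then have a: "src2 K a = F'" "tgt2 K a = comp1 K h G'" by (auto simp: cell2_def)
        have x: "vcomp K (lw K (tgt2 K a) \<epsilon>) (rw K a (src2 K \<epsilon>)) = vcomp K (rw K a (tgt2 K \<epsilon>)) (lw K (src2 K a) \<epsilon>)"
          by (rule whisk_xch) (use a T cF' in simp)
        have "lw K (tgt2 K a) \<epsilon> = lw K h (lw K G' \<epsilon>)" using a T cG' hh by (simp add: lw_lw)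
        also have "\<dots> = id2 K (comp1 K h G')" using e2 a T cG' hh by simp
        finally have x1: "lw K (tgt2 K a) \<epsilon> = id2 K (comp1 K h G')" .
        have x2: "rw K a (src2 K \<epsilon>) = a" using a T cF' by simp
        have x3: "lw K (src2 K a) \<epsilon> = id2 K F'" using a e1 by simp
        have "comp1 K F' (comp1 K w u) = comp1 K F (comp1 K (comp1 K u w) u)"
          using F'[symmetric] T by (simp add: compA)
        then have Fwu: "comp1 K F' (comp1 K w u) = F'" using uw F' T by simp
        have "rw K a (comp1 K w u) = a" using x x1 x2 x3 a T cF' cG' hh Fwu by simp
        moreover have "rw K (rw K a w) u = rw K a (comp1 K w u)" using a T cF' by (simp add: rw_rw)
        ultimately show "rw K (rw K a w) u = a" by simp
      qed
      show "(\<lambda>\<tau>. rw K \<tau> u) ` ?S2 \<subseteq> ?S3"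
        using T hh F'[symmetric] G'[symmetric] by (auto simp: cell2_def compA)
      show "(\<lambda>\<sigma>. rw K \<sigma> w) ` ?S3 \<subseteq> ?S2"
        using T hh F'[symmetric] G'[symmetric] cF' cG' uw by (auto simp: cell2_def compA)
    qed
    have "bij_betw ((\<lambda>\<tau>. rw K \<tau> u) \<circ> (\<lambda>\<kappa>. vcomp K (rw K \<kappa> G) \<phi>)) ?S1 ?S3"
      by (rule bij_betw_trans[OF M W])
    moreover have eqk: "vcomp K (rw K \<kappa> G') (rw K \<phi> u) = ((\<lambda>\<tau>. rw K \<tau> u) \<circ> (\<lambda>\<kappa>. vcomp K (rw K \<kappa> G) \<phi>)) \<kappa>"
      if "\<kappa> \<in> ?S1" for \<kappa>
    proof -
      have k: "src2 K \<kappa> = H" "tgt2 K \<kappa> = h" using that by (auto simp: cell2_def)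
      have "rw K (vcomp K (rw K \<kappa> G) \<phi>) u = vcomp K (rw K (rw K \<kappa> G) u) (rw K \<phi> u)"
        using k T by (simp add: rw_vc)
      also have "\<dots> = vcomp K (rw K \<kappa> G') (rw K \<phi> u)" using k T G' by (simp add: rw_rw)
      finally show ?thesis by simp
    qed
    moreover have "bij_betw (\<lambda>\<kappa>. vcomp K (rw K \<kappa> G') (rw K \<phi> u)) ?S1 ?S3 =
       bij_betw ((\<lambda>\<tau>. rw K \<tau> u) \<circ> (\<lambda>\<kappa>. vcomp K (rw K \<kappa> G) \<phi>)) ?S1 ?S3"
      by (rule bij_betw_cong) (rule eqk)
    ultimately show ?thesis by simp
  qed
  have side: "dom1 K G' = dom1 K F'" "arr1 K H (cod1 K G') (cod1 K F')" "cell2 K (rw K \<phi> u) F' (comp1 K H G')"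
    using T cF' cG' F'[symmetric] G'[symmetric] by (auto simp: arr1_def cell2_def compA)
  show ?thesis unfolding left_ext_def using side main cF' cG' by simp
qed

lemma id_lift: "arr1 K g D P \<Longrightarrow> left_lift K (id2 K g) g g (id1 K P)"
proof -
  assume g: "arr1 K g D P"
  note gg = g[unfolded arr1_def]
  have "bij_betw (\<lambda>\<kappa>. vcomp K (lw K (id1 K P) \<kappa>) (id2 K g)) {\<kappa>. cell2 K \<kappa> g k} {\<sigma>. cell2 K \<sigma> g (comp1 K (id1 K P) k)}"
    if k: "arr1 K k D P" for k
  proof -
    have e: "{\<sigma>. cell2 K \<sigma> g (comp1 K (id1 K P) k)} = {\<kappa>. cell2 K \<kappa> g k}"
      using k by (simp add: arr1_def)
    have "bij_betw (\<lambda>\<kappa>. vcomp K (lw K (id1 K P) \<kappa>) (id2 K g)) {\<kappa>. cell2 K \<kappa> g k} {\<kappa>. cell2 K \<kappa> g k}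
        = bij_betw id {\<kappa>. cell2 K \<kappa> g k} {\<kappa>. cell2 K \<kappa> g k}"
      by (rule bij_betw_cong) (use gg in \<open>auto simp: cell2_def\<close>)
    then show ?thesis using e by simp
  qed
  then show ?thesis unfolding left_lift_def using gg by (simp add: arr1_def cell2_def)
qed

end

lemma lax_ext:
  assumes TC: "two_category K" and GY: "good_yoneda K Y" and C: "admissible_obj K Y C"
    and i: "arr1 K i X (PSh Y C)"
    and LP: "is_lax_pullback K (yon Y C) i L p q l"
  shows "left_ext K l (comp1 K (yon Y C) p) q i"
proof -
  interpret twocat K by (rule twocat.intro[OF TC])
  have y: "arr1 K (yon Y C) C (PSh Y C)" "yon Y C \<in> adm Y"
    using GY C unfolding good_yoneda_def by auto
  have abs: "abs_left_lift K (id2 K (yon Y C)) (yon Y C) (yon Y C) (id1 K (PSh Y C))"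
    unfolding abs_left_lift_def
  proof (intro conjI allI impI)
    show "left_lift K (id2 K (yon Y C)) (yon Y C) (yon Y C) (id1 K (PSh Y C))"
      by (rule id_lift[OF y(1)])
    fix D j assume j: "arr1 K j D (dom1 K (yon Y C))"
    have "left_lift K (id2 K (comp1 K (yon Y C) j)) (comp1 K (yon Y C) j) (comp1 K (yon Y C) j) (id1 K (PSh Y C))"
      by (rule id_lift) (use j y in \<open>auto simp: arr1_def\<close>)
    then show "left_lift K (rw K (id2 K (yon Y C)) j) (comp1 K (yon Y C) j) (comp1 K (yon Y C) j) (id1 K (PSh Y C))"
      using j y by (simp add: arr1_def)
  qed
  have dy: "dom1 K (yon Y C) = C" using y by (simp add: arr1_def)
  have GY4: "\<And>f g \<psi>. admissible_obj K Y (dom1 K f) \<Longrightarrow> f \<in> adm Y \<Longrightarrow>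
     abs_left_lift K \<psi> (yon Y (dom1 K f)) f g \<Longrightarrow> pointwise_left_ext K \<psi> (yon Y (dom1 K f)) f g"
    using GY unfolding good_yoneda_def by blast
  have pw: "pointwise_left_ext K (id2 K (yon Y C)) (yon Y C) (yon Y C) (id1 K (PSh Y C))"
    using GY4[of "yon Y C"] C y abs dy by simp
  have "left_ext K (vcomp K (lw K (id1 K (PSh Y C)) l) (rw K (id2 K (yon Y C)) p)) (comp1 K (yon Y C) p) q
          (comp1 K (id1 K (PSh Y C)) i)"
    using pw LP i y unfolding pointwise_left_ext_def by (auto simp: arr1_def)
  moreover note P = lp_parts[OF LP]
  ultimately show ?thesis using y i by (simp add: arr1_def)
qed




theorem lemma3p13:
  fixes K :: "('o,'a,'c,'x) two_cat_scheme"
    and Y :: "('o,'a,'c,'y) yoneda_data_scheme"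
    and C M A L :: 'o
    and i f p q k :: 'a
    and l \<eta> \<eta>' :: 'c
  assumes "two_category K"
    and "finitely_complete K"
    and "good_yoneda K Y"
    and "small_obj K Y C"
    and "arr1 K i M (PSh Y C)" and "admissible_obj K Y M"
    and "arr1 K f C A" and "f \<in> adm Y"
    and "is_lax_pullback K (yon Y C) i L p q l"
    and "arr1 K k M A"
    and "cell2 K \<eta> i (comp1 K (Bhom Y f) k)"
    and "cell2 K \<eta>' (comp1 K f p) (comp1 K k q)"
    and "vcomp K (lw K (Bhom Y f) \<eta>') (rw K (chi Y f) p) = vcomp K (rw K \<eta> q) l"
  shows "(left_lift K \<eta> i k (Bhom Y f) \<longleftrightarrow> left_ext K \<eta>' (comp1 K f p) q k) \<and>
         (abs_left_lift K \<eta> i k (Bhom Y f) \<longleftrightarrow> pointwise_left_ext K \<eta>' (comp1 K f p) q k)"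
proof -
  note TC = assms(1) and FC = assms(2) and GY = assms(3) and sm = assms(4) and i = assms(5)
    and f = assms(7) and fa = assms(8) and LP = assms(9) and k = assms(10) and eta = assms(11)
    and eta' = assms(12) and eq = assms(13)
  interpret twocat K by (rule twocat.intro[OF TC])
  define y where "y = yon Y C"
  define B where "B = Bhom Y f"
  define \<chi> where "\<chi> = chi Y f"
  have Cadm: "admissible_obj K Y C" using sm unfolding small_obj_def by simp
  have y: "arr1 K y C (PSh Y C)" unfolding y_def using GY Cadm unfolding good_yoneda_def by auto
  have df: "dom1 K f = C" "cod1 K f = A" using f by (auto simp: arr1_def)
  have GY3: "arr1 K (Bhom Y f) (cod1 K f) (PSh Y (dom1 K f)) \<and>
        cell2 K (chi Y f) (yon Y (dom1 K f)) (comp1 K (Bhom Y f) f) \<and>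
        abs_left_lift K (chi Y f) (yon Y (dom1 K f)) f (Bhom Y f)"
    using GY Cadm fa df unfolding good_yoneda_def by auto
  have B: "arr1 K B A (PSh Y C)" and chic: "cell2 K \<chi> y (comp1 K B f)"
    and chi: "abs_left_lift K \<chi> y f B"
    using GY3 df unfolding B_def \<chi>_def y_def by auto
  note P = lp_parts[OF LP, folded y_def]
  have p: "arr1 K p L C" and q: "arr1 K q L M" using P y i by (auto simp: arr1_def)
  have lext: "left_ext K l (comp1 K y p) q i"
    unfolding y_def by (rule lax_ext[OF TC GY Cadm i LP])
  note LP' = LP[folded y_def]
  have part1: "left_lift K \<eta> i k B \<longleftrightarrow> left_ext K \<eta>' (comp1 K f p) q k"
    by (rule core[OF B f y chi p q i lext k eta[folded B_def] eta' eq[folded B_def \<chi>_def]])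
  note TT = B[unfolded arr1_def] f[unfolded arr1_def] y[unfolded arr1_def] p[unfolded arr1_def]
     q[unfolded arr1_def] i[unfolded arr1_def] k[unfolded arr1_def] chic[unfolded cell2_def]
     eta[folded B_def, unfolded cell2_def] eta'[unfolded cell2_def] P
  have G: "left_lift K (rw K \<eta> c) (comp1 K i c) (comp1 K k c) B \<longleftrightarrow>
           left_ext K (vcomp K (lw K k l') (rw K \<eta>' p')) (comp1 K (comp1 K f p) p') q' (comp1 K k c)"
    if c: "arr1 K c X M" and LPq: "is_lax_pullback K q c P' p' q' l'" for X c P' p' q' l'
  proof -
    note Q = lp_parts[OF LPq]
    note cc = c[unfolded arr1_def]
    have ic: "arr1 K (comp1 K i c) X (PSh Y C)" using TT cc by (simp add: arr1_def)
    obtain Lc pc qc lc where LPc: "is_lax_pullback K y (comp1 K i c) Lc pc qc lc"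
      using FC TT cc unfolding finitely_complete_def by force
    note R = lp_parts[OF LPc]
    have c': "arr1 K c X (dom1 K i)" using c TT by simp
    obtain u w \<epsilon> where U: "arr1 K u P' Lc" "arr1 K w Lc P'" "comp1 K u w = id1 K Lc"
      "cell2 K \<epsilon> (id1 K P') (comp1 K w u)" "comp1 K pc u = comp1 K p p'" "comp1 K qc u = q'"
      "rw K lc u = vcomp K (lw K i l') (rw K l p')"
      "lw K (comp1 K p p') \<epsilon> = id2 K (comp1 K p p')" "lw K q' \<epsilon> = id2 K q'"
      using comma_paste[OF LP' c' LPq LPc] by blast
    note UU = U(1)[unfolded arr1_def] U(2)[unfolded arr1_def] U(4)[unfolded cell2_def]
    have lc: "left_ext K lc (comp1 K y pc) qc (comp1 K i c)"
      unfolding y_def by (rule lax_ext[OF TC GY Cadm ic LPc[unfolded y_def]])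
    have yu: "comp1 K (comp1 K y pc) u = comp1 K y (comp1 K p p')"
      using TT R UU U(5) ic by (simp add: compA arr1_def)
    have e1: "lw K (comp1 K y (comp1 K p p')) \<epsilon> = id2 K (comp1 K y (comp1 K p p'))"
    proof -
      have "lw K (comp1 K y (comp1 K p p')) \<epsilon> = lw K y (lw K (comp1 K p p') \<epsilon>)"
        using TT Q UU by (simp add: lw_lw)
      then show ?thesis using U(8) TT Q by simp
    qed
    have th: "left_ext K (vcomp K (lw K i l') (rw K l p')) (comp1 K y (comp1 K p p')) q' (comp1 K i c)"
      using transfer[OF lc U(1) U(2) _ U(3) U(4) yu U(6) e1 U(9)] R U(7) ic by (simp add: arr1_def)
    have pp: "arr1 K (comp1 K p p') P' C" using TT Q by (simp add: arr1_def)
    have q': "arr1 K q' P' X" using Q cc by (simp add: arr1_def)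
    have kc: "arr1 K (comp1 K k c) X A" using TT cc by (simp add: arr1_def)
    have etac: "cell2 K (rw K \<eta> c) (comp1 K i c) (comp1 K B (comp1 K k c))"
      using TT cc by (simp add: cell2_def compA)
    have etac': "cell2 K (vcomp K (lw K k l') (rw K \<eta>' p')) (comp1 K f (comp1 K p p')) (comp1 K (comp1 K k c) q')"
      using TT cc Q by (simp add: cell2_def compA)
    have eqc: "vcomp K (lw K B (vcomp K (lw K k l') (rw K \<eta>' p'))) (rw K \<chi> (comp1 K p p'))
       = vcomp K (rw K (rw K \<eta> c) q') (vcomp K (lw K i l') (rw K l p'))"
    proof -
      have "vcomp K (lw K B (vcomp K (lw K k l') (rw K \<eta>' p'))) (rw K \<chi> (comp1 K p p'))
          = vcomp K (vcomp K (lw K B (lw K k l')) (lw K B (rw K \<eta>' p'))) (rw K (rw K \<chi> p) p')"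
        using TT Q cc by (simp add: lw_vc rw_rw compA)
      also have "\<dots> = vcomp K (lw K B (lw K k l')) (rw K (vcomp K (lw K B \<eta>') (rw K \<chi> p)) p')"
        using TT Q cc by (simp add: vcA rw_vc rw_lw compA)
      also have "\<dots> = vcomp K (lw K B (lw K k l')) (rw K (vcomp K (rw K \<eta> q) l) p')"
        using eq unfolding B_def \<chi>_def by simp
      also have "\<dots> = vcomp K (vcomp K (lw K (comp1 K B k) l') (rw K \<eta> (comp1 K q p'))) (rw K l p')"
        using TT Q cc by (simp add: vcA rw_vc lw_lw rw_rw compA)
      also have "vcomp K (lw K (comp1 K B k) l') (rw K \<eta> (comp1 K q p')) = vcomp K (rw K \<eta> (comp1 K c q')) (lw K i l')"
        using whisk_xch[of \<eta> l'] TT Q cc by simp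
      also have "vcomp K (vcomp K (rw K \<eta> (comp1 K c q')) (lw K i l')) (rw K l p')
          = vcomp K (rw K (rw K \<eta> c) q') (vcomp K (lw K i l') (rw K l p'))"
        using TT Q cc by (simp add: vcA rw_rw compA)
      finally show ?thesis .
    qed
    have "left_lift K (rw K \<eta> c) (comp1 K i c) (comp1 K k c) B \<longleftrightarrow>
          left_ext K (vcomp K (lw K k l') (rw K \<eta>' p')) (comp1 K f (comp1 K p p')) q' (comp1 K k c)"
      by (rule core[OF B f y chi pp q' ic th kc etac etac' eqc])
    moreover have "comp1 K f (comp1 K p p') = comp1 K (comp1 K f p) p'" using TT Q by (simp add: compA)
    ultimately show ?thesis by simp
  qed
  have ex: "\<exists>P' p' q' l'. is_lax_pullback K q c P' p' q' l'" if "arr1 K c X M" for X c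
    using FC that TT unfolding finitely_complete_def by (auto simp: arr1_def)
  have part2: "abs_left_lift K \<eta> i k B \<longleftrightarrow> pointwise_left_ext K \<eta>' (comp1 K f p) q k"
  proof
    assume a: "abs_left_lift K \<eta> i k B"
    show "pointwise_left_ext K \<eta>' (comp1 K f p) q k"
      unfolding pointwise_left_ext_def
    proof (intro conjI allI impI)
      show "dom1 K q = dom1 K (comp1 K f p)" "arr1 K k (cod1 K q) (cod1 K (comp1 K f p))"
        "cell2 K \<eta>' (comp1 K f p) (comp1 K k q)" using TT eta' by (auto simp: arr1_def)
      fix X c P' p' q' l'
      assume h: "arr1 K c X (cod1 K q) \<and> is_lax_pullback K q c P' p' q' l'"
      then have c: "arr1 K c X M" using TT by simp
      have "left_lift K (rw K \<eta> c) (comp1 K i c) (comp1 K k c) B"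
        using a c TT unfolding abs_left_lift_def by auto
      then show "left_ext K (vcomp K (lw K k l') (rw K \<eta>' p')) (comp1 K (comp1 K f p) p') q' (comp1 K k c)"
        using G[OF c] h by blast
    qed
  next
    assume a: "pointwise_left_ext K \<eta>' (comp1 K f p) q k"
    have gen: "left_lift K (rw K \<eta> c) (comp1 K i c) (comp1 K k c) B" if c: "arr1 K c X M" for X c
    proof -
      obtain P' p' q' l' where LPq: "is_lax_pullback K q c P' p' q' l'" using ex[OF c] by blast
      have "left_ext K (vcomp K (lw K k l') (rw K \<eta>' p')) (comp1 K (comp1 K f p) p') q' (comp1 K k c)"
        using a c LPq TT unfolding pointwise_left_ext_def by auto
      then show ?thesis using G[OF c LPq] by blast
    qed
    have "left_lift K (rw K \<eta> (id1 K M)) (comp1 K i (id1 K M)) (comp1 K k (id1 K M)) B"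
      by (rule gen) (simp add: arr1_def)
    then have "left_lift K \<eta> i k B" using TT by simp
    moreover have "left_lift K (rw K \<eta> j) (comp1 K i j) (comp1 K k j) B" if "arr1 K j D (dom1 K i)" for D j
      using gen that TT by simp
    ultimately show "abs_left_lift K \<eta> i k B" unfolding abs_left_lift_def by blast
  qed
  show ?thesis using part1 part2 unfolding B_def by simp
qed


end
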